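(* Let $h:[p]\to[m]$ be a random map with $h(j)=h_j\overset{iid}{\sim}\mathrm{Unif}([m])$ for each $j\in[p]$. For $k\in[m]$ let $h^{-1}(k)=\{j\in[p]:h(j)=k\}$ be the (random) preimage set. Let $\mathcal{A}\subset[p]$ with $a=|\mathcal{A}|>1$, and let $j\in[p]$. Then $$\mathbb{E}\Big[\frac{|\mathcal{A}\cap h^{-1}(h_j)\setminus\{j\}|}{|h^{-1}(h_j)|}\Big]=\frac{a-\mathbf{I}\{j\in\mathcal{A}\}}{p-1}\cdot\Big(1-\frac{m}{p}\Big(1-\Big(\frac{m-1}{m}\Big)^p\Big)\Big),$$ and $$\mathbb{E}\Big[\frac{|\mathcal{A}\cap h^{-1}(h_j)\setminus\{j\}|}{|h^{-1}(h_j)|^2}\Big]=m\,\frac{a-\mathbf{I}\{j\in\mathcal{A}\}}{p-1}\cdot\Big(\frac{1}{p-1}-\frac{m+1}{(p-1)^2}+\mathcal{O}(p^{-3})\Big).$$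
   Context: $[k]$ denotes $\{1,\dots,k\}$. $\mathbf{I}\{\cdot\}$ is the indicator function. *)

theory Defs
  imports "HOL-Probability.Probability"
begin

definition hash_pmf :: "nat \<Rightarrow> nat \<Rightarrow> (nat \<Rightarrow> nat) pmf" where
  "hash_pmf p m = Pi_pmf {1..p} 0 (\<lambda>_. pmf_of_set {1..m})"

definition preim :: "(nat \<Rightarrow> nat) \<Rightarrow> nat \<Rightarrow> nat \<Rightarrow> nat set" where
  "preim h p k = {i \<in> {1..p}. h i = k}"

end

theory Submission
  imports Defs
begin


lemma binsum_fact:
  fixes q :: real
  assumes q: "0 < q"
  shows "(\<Sum>k\<le>N. real (N choose k) * q^k * (1-q)^(N-k) * (fact k / fact (k+j)))
    = fact N / (fact (N+j) * q^j) * (1 - (\<Sum>l<j. real ((N+j) choose l) * q^l * (1-q)^(N+j-l)))"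
proof -
  define \<phi> where "\<phi> l = real ((N+j) choose l) * q^l * (1-q)^(N+j-l)" for l
  have eq1: "real (N choose k) * q^k * (1-q)^(N-k) * (fact k / fact (k+j))
      = fact N / (fact (N+j) * q^j) * \<phi> (k+j)" if "k \<le> N" for k
  proof -
    have e1: "real (N choose k) = fact N / (fact k * fact (N-k))" using that by (rule binomial_fact)
    have e2: "real ((N+j) choose (k+j)) = fact (N+j) / (fact (k+j) * fact (N-k))"
      using binomial_fact[of "k+j" "N+j"] that by simp
    have c: "real (N choose k) * (fact k / fact (k+j)) = real ((N+j) choose (k+j)) * (fact N / fact (N+j))"
      unfolding e1 e2 by (simp add: field_simps)
    have "real (N choose k) * q^k * (1-q)^(N-k) * (fact k / fact (k+j))
       = (real (N choose k) * (fact k / fact (k+j))) * q^k * (1-q)^(N-k)" by (simp add: algebra_simps)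
    also have "\<dots> = real ((N+j) choose (k+j)) * (fact N / fact (N+j)) * q^k * (1-q)^(N-k)" by (simp only: c)
    also have "\<dots> = fact N / (fact (N+j) * q^j) * \<phi> (k+j)"
      using q unfolding \<phi>_def by (simp add: power_add)
    finally show ?thesis .
  qed
  have "(\<Sum>k\<le>N. real (N choose k) * q^k * (1-q)^(N-k) * (fact k / fact (k+j)))
      = (\<Sum>k\<le>N. fact N / (fact (N+j) * q^j) * \<phi> (k+j))"
    by (rule sum.cong) (simp_all only: eq1 atMost_iff)
  also have "\<dots> = fact N / (fact (N+j) * q^j) * (\<Sum>k=0..N. \<phi> (k+j))"
    by (simp add: sum_distrib_left atMost_atLeast0)
  also have "(\<Sum>k=0..N. \<phi> (k+j)) = (\<Sum>l=j..N+j. \<phi> l)"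
    using sum.shift_bounds_cl_nat_ivl[of \<phi> 0 j N] by simp
  also have "\<dots> = 1 - (\<Sum>l<j. \<phi> l)"
  proof -
    have "{..N+j} = {..<j} \<union> {j..N+j}" by auto
    hence "(\<Sum>l\<le>N+j. \<phi> l) = (\<Sum>l<j. \<phi> l) + (\<Sum>l=j..N+j. \<phi> l)"
      by (simp add: sum.union_disjoint ivl_disj_int)
    moreover have "(\<Sum>l\<le>N+j. \<phi> l) = 1"
      using binomial_ring[of q "1-q" "N+j"] unfolding \<phi>_def by simp
    ultimately show ?thesis by simp
  qed
  finally show ?thesis unfolding \<phi>_def .
qed




lemma bern_map:
  assumes "x \<in> {1..m}"
  shows "map_pmf (\<lambda>y. y = x) (pmf_of_set {1..m}) = bernoulli_pmf (1 / real m)"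
proof (rule pmf_eqI)
  fix b :: bool
  have m: "m \<ge> 1" using assms by auto
  have ne: "{1..m} \<noteq> {}" "finite {1..m}" using m by auto
  show "pmf (map_pmf (\<lambda>y. y = x) (pmf_of_set {1..m})) b = pmf (bernoulli_pmf (1 / real m)) b"
  proof (cases b)
    case True
    have "{1..m} \<inter> ((\<lambda>y. y = x) -` {b}) = {x}" using True assms by auto
    then show ?thesis using True ne m
      by (simp add: pmf_map measure_pmf_of_set)
  next
    case False
    have "{1..m} \<inter> ((\<lambda>y. y = x) -` {b}) = {1..m} - {x}" using False assms by auto
    moreover have "card ({1..m} - {x}) = m - 1" using assms by simp
    ultimately show ?thesis using False ne m
      by (simp add: pmf_map measure_pmf_of_set of_nat_diff field_simps)
  qed
qed

lemma count_binomial: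
  assumes "finite R" "x \<in> {1..m}"
  shows "map_pmf (\<lambda>g. card {k\<in>R. g k = x}) (Pi_pmf R 0 (\<lambda>_. pmf_of_set {1..m}))
       = binomial_pmf (card R) (1 / real m)"
proof -
  have m: "m \<ge> 1" using assms by auto
  have "binomial_pmf (card R) (1 / real m)
     = map_pmf (\<lambda>f. card {k\<in>R. f k}) (Pi_pmf R False (\<lambda>_. bernoulli_pmf (1 / real m)))"
    by (rule binomial_pmf_altdef') (use assms m in auto)
  also have "Pi_pmf R False (\<lambda>_. bernoulli_pmf (1 / real m))
      = Pi_pmf R False (\<lambda>_. map_pmf (\<lambda>y. y = x) (pmf_of_set {1..m}))"
    using bern_map[OF assms(2)] by simp
  also have "\<dots> = map_pmf (\<lambda>h. (\<lambda>y. y = x) \<circ> h) (Pi_pmf R 0 (\<lambda>_. pmf_of_set {1..m}))"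
    by (rule Pi_pmf_map) (use assms in auto)
  finally show ?thesis by (simp add: pmf.map_comp o_def)
qed




lemma fin_set_Pi:
  assumes "finite A" "m \<ge> 1"
  shows "finite (set_pmf (Pi_pmf A 0 (\<lambda>_. pmf_of_set {1..m::nat})))"
  using assms by (subst set_Pi_pmf) (auto intro!: finite_PiE_dflt)

lemma exp_insert:
  fixes F :: "(nat \<Rightarrow> nat) \<Rightarrow> real"
  assumes "finite A" "x \<notin> A" "m \<ge> 1"
  shows "measure_pmf.expectation (Pi_pmf (insert x A) 0 (\<lambda>_. pmf_of_set {1..m})) F
    = (\<Sum>y\<in>{1..m}. measure_pmf.expectation (Pi_pmf A 0 (\<lambda>_. pmf_of_set {1..m})) (\<lambda>f. F (f(x:=y))) / real m)"
proof -
  have "Pi_pmf (insert x A) 0 (\<lambda>_. pmf_of_set {1..m})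
     = pmf_of_set {1..m} \<bind> (\<lambda>y. map_pmf (\<lambda>f. f(x:=y)) (Pi_pmf A 0 (\<lambda>_. pmf_of_set {1..m})))"
    by (subst Pi_pmf_insert') (use assms in \<open>simp_all add: map_pmf_def\<close>)
  also have "measure_pmf.expectation \<dots> F
     = (\<Sum>y\<in>{1..m}. measure_pmf.expectation (map_pmf (\<lambda>f. f(x:=y)) (Pi_pmf A 0 (\<lambda>_. pmf_of_set {1..m}))) F / real m)"
    by (subst pmf_expectation_bind_pmf_of_set) (use assms fin_set_Pi[OF assms(1) assms(3)] in \<open>auto simp: field_simps\<close>)
  finally show ?thesis unfolding integral_map_pmf .
qed

lemma preim_upd:
  assumes "i \<noteq> j" "i \<in> {1..p}" "j \<in> {1..p}"
  shows "card (preim (g(i:=x, j:=x)) p x) = card {k\<in>{1..p} - {i,j}. g k = x} + 2"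
proof -
  have "preim (g(i:=x, j:=x)) p x = insert j (insert i {k\<in>{1..p} - {i,j}. g k = x})"
    using assms unfolding preim_def by auto
  then show ?thesis using assms by simp
qed

lemma pair_exp:
  fixes G :: "nat \<Rightarrow> real"
  assumes m: "m \<ge> 1" and ij: "i \<noteq> j" "i \<in> {1..p}" "j \<in> {1..p}"
  shows "measure_pmf.expectation (hash_pmf p m)
           (\<lambda>h. (if h i = h j then 1 else 0) * G (card (preim h p (h j))))
       = measure_pmf.expectation (binomial_pmf (p-2) (1/real m)) (\<lambda>k. G (k+2)) / real m"
proof -
  define R where "R = {1..p} - {i,j}"
  define U where "U = pmf_of_set {1..m}"
  define F where "F = (\<lambda>h::nat\<Rightarrow>nat. (if h i = h j then 1 else 0) * G (card (preim h p (h j))))"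
  have R: "finite R" "i \<notin> R" "j \<notin> insert i R" using ij unfolding R_def by auto
  have P: "{1..p} = insert j (insert i R)" using ij unfolding R_def by auto
  have cR: "card R = p - 2" using ij unfolding R_def by (simp add: card_Diff_subset)
  have Fx: "F (g(i:=y, j:=x)) = (if y = x then G (card {k\<in>R. g k = x} + 2) else 0)" for g y x
  proof (cases "y = x")
    case True
    then show ?thesis using preim_upd[OF ij, of g x] ij unfolding F_def R_def by simp
  next
    case False
    then show ?thesis using ij unfolding F_def by simp
  qed
  have B: "measure_pmf.expectation (Pi_pmf R 0 (\<lambda>_. U)) (\<lambda>g. G (card {k\<in>R. g k = x} + 2))
      = measure_pmf.expectation (binomial_pmf (p-2) (1/real m)) (\<lambda>k. G (k+2))" if "x \<in> {1..m}" for x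
  proof -
    have "binomial_pmf (p-2) (1/real m) = map_pmf (\<lambda>g. card {k\<in>R. g k = x}) (Pi_pmf R 0 (\<lambda>_. U))"
      using count_binomial[OF R(1) that] cR unfolding U_def by simp
    then show ?thesis by simp
  qed
  have inner: "measure_pmf.expectation (Pi_pmf R 0 (\<lambda>_. U)) (\<lambda>g. F (g(i:=y, j:=x)))
     = (if y = x then measure_pmf.expectation (Pi_pmf R 0 (\<lambda>_. U)) (\<lambda>g. G (card {k\<in>R. g k = x} + 2)) else 0)" for x y
    by (cases "y = x") (simp_all only: Fx if_True if_False integral_zero simp_thms)
  have "measure_pmf.expectation (hash_pmf p m) F
      = (\<Sum>x\<in>{1..m}. (\<Sum>y\<in>{1..m}. measure_pmf.expectation (Pi_pmf R 0 (\<lambda>_. U)) (\<lambda>g. F (g(i:=y, j:=x))) / real m) / real m)"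
  proof -
    have "measure_pmf.expectation (hash_pmf p m) F
      = (\<Sum>x\<in>{1..m}. measure_pmf.expectation (Pi_pmf (insert i R) 0 (\<lambda>_. U)) (\<lambda>f. F (f(j:=x))) / real m)"
      unfolding hash_pmf_def P U_def using R m by (intro exp_insert) auto
    also have "\<dots> = (\<Sum>x\<in>{1..m}. (\<Sum>y\<in>{1..m}. measure_pmf.expectation (Pi_pmf R 0 (\<lambda>_. U)) (\<lambda>g. F (g(i:=y, j:=x))) / real m) / real m)"
      unfolding U_def using R m by (intro sum.cong refl, subst exp_insert) auto
    finally show ?thesis .
  qed
  also have "\<dots> = (\<Sum>x\<in>{1..m}. (\<Sum>y\<in>{1..m}. (if y = x then measure_pmf.expectation (Pi_pmf R 0 (\<lambda>_. U)) (\<lambda>g. G (card {k\<in>R. g k = x} + 2)) else 0) / real m) / real m)"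
    by (simp only: inner)
  also have "\<dots> = (\<Sum>x\<in>{1..m}. measure_pmf.expectation (binomial_pmf (p-2) (1/real m)) (\<lambda>k. G (k+2)) / real m / real m)"
  proof (rule sum.cong[OF refl])
    fix x assume x: "x \<in> {1..m}"
    define EE where "EE = measure_pmf.expectation (Pi_pmf R 0 (\<lambda>_. U)) (\<lambda>g. G (card {k\<in>R. g k = x} + 2))"
    have "(\<Sum>y\<in>{1..m}. (if y = x then EE else 0) / real m) = (\<Sum>y\<in>{1..m}. (if y = x then EE else 0)) / real m"
      by (simp only: sum_divide_distrib)
    also have "\<dots> = EE / real m" using x by (simp add: sum.delta)
    finally show "(\<Sum>y\<in>{1..m}. (if y = x then EE else 0) / real m) / real m
        = measure_pmf.expectation (binomial_pmf (p-2) (1/real m)) (\<lambda>k. G (k+2)) / real m / real m"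
      using B[OF x] unfolding EE_def by simp
  qed
  also have "\<dots> = measure_pmf.expectation (binomial_pmf (p-2) (1/real m)) (\<lambda>k. G (k+2)) / real m"
    using m by simp
  finally show ?thesis unfolding F_def .
qed




lemma main_exp:
  fixes G :: "nat \<Rightarrow> real"
  assumes m: "m \<ge> 1" and A: "A \<subseteq> {1..p}" and j: "j \<in> {1..p}"
  shows "measure_pmf.expectation (hash_pmf p m)
           (\<lambda>h. real (card (A \<inter> preim h p (h j) - {j})) * G (card (preim h p (h j))))
       = real (card (A - {j})) * (measure_pmf.expectation (binomial_pmf (p-2) (1/real m)) (\<lambda>k. G (k+2)) / real m)"
proof -
  have fin: "finite (set_pmf (hash_pmf p m))" unfolding hash_pmf_def using m by (intro fin_set_Pi) auto
  have fA: "finite A" using A finite_subset by blast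
  have eq: "real (card (A \<inter> preim h p (h j) - {j})) * G (card (preim h p (h j)))
     = (\<Sum>i\<in>A-{j}. (if h i = h j then 1 else 0) * G (card (preim h p (h j))))" for h
  proof -
    have "A \<inter> preim h p (h j) - {j} = {i\<in>A-{j}. h i = h j}" using A unfolding preim_def by auto
    hence "real (card (A \<inter> preim h p (h j) - {j})) = (\<Sum>i\<in>A-{j}. (if h i = h j then 1 else 0))"
      using fA by (simp add: sum.If_cases Int_def conj_commute)
    thus ?thesis by (simp add: sum_distrib_right)
  qed
  have "measure_pmf.expectation (hash_pmf p m)
           (\<lambda>h. real (card (A \<inter> preim h p (h j) - {j})) * G (card (preim h p (h j))))
     = (\<Sum>i\<in>A-{j}. measure_pmf.expectation (hash_pmf p m) (\<lambda>h. (if h i = h j then 1 else 0) * G (card (preim h p (h j)))))"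
    unfolding eq by (rule Bochner_Integration.integral_sum) (use fin in \<open>simp add: integrable_measure_pmf_finite\<close>)
  also have "\<dots> = (\<Sum>i\<in>A-{j}. measure_pmf.expectation (binomial_pmf (p-2) (1/real m)) (\<lambda>k. G (k+2)) / real m)"
    by (intro sum.cong refl pair_exp) (use m A j in auto)
  finally show ?thesis by simp
qed




lemma bin_exp:
  fixes f :: "nat \<Rightarrow> real" and q :: real
  assumes "0 \<le> q" "q \<le> 1"
  shows "measure_pmf.expectation (binomial_pmf N q) f
       = (\<Sum>k\<le>N. real (N choose k) * q^k * (1-q)^(N-k) * f k)"
proof -
  have "measure_pmf.expectation (binomial_pmf N q) f = (\<Sum>k\<le>N. f k * pmf (binomial_pmf N q) k)"
    by (rule integral_measure_pmf_real) (use assms in \<open>auto simp: set_pmf_binomial_eq split: if_splits\<close>)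
  also have "\<dots> = (\<Sum>k\<le>N. real (N choose k) * q^k * (1-q)^(N-k) * f k)"
    using assms by (intro sum.cong refl) simp
  finally show ?thesis .
qed

lemma fact_ratio:
  "fact k / fact (k+1) = (1::real) / (real k + 1)"
  "fact k / fact (k+2) = (1::real) / ((real k + 1) * (real k + 2))"
  "fact k / fact (k+3) = (1::real) / ((real k + 1) * (real k + 2) * (real k + 3))"
  "fact k / fact (k+4) = (1::real) / ((real k + 1) * (real k + 2) * (real k + 3) * (real k + 4))"
proof -
  have gen: "fact k / (c * fact k) = (1::real) / c" for c by simp
  have f1: "fact (k+1) = (real k + 1) * (fact k :: real)" by simp
  have f2: "fact (k+2) = ((real k + 1) * (real k + 2)) * (fact k :: real)"
    using f1 fact_Suc[of "k+1"] by (simp add: algebra_simps)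
  have f3: "fact (k+3) = ((real k + 1) * (real k + 2) * (real k + 3)) * (fact k :: real)"
    using f2 fact_Suc[of "k+2"] by (simp add: eval_nat_numeral algebra_simps)
  have f4: "fact (k+4) = ((real k + 1) * (real k + 2) * (real k + 3) * (real k + 4)) * (fact k :: real)"
    using f3 fact_Suc[of "k+3"] by (simp add: eval_nat_numeral algebra_simps)
  show "fact k / fact (k+1) = (1::real) / (real k + 1)"
    unfolding f1 gen ..
  show "fact k / fact (k+2) = (1::real) / ((real k + 1) * (real k + 2))"
    unfolding f2 gen ..
  show "fact k / fact (k+3) = (1::real) / ((real k + 1) * (real k + 2) * (real k + 3))"
    unfolding f3 gen ..
  show "fact k / fact (k+4) = (1::real) / ((real k + 1) * (real k + 2) * (real k + 3) * (real k + 4))"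
    unfolding f4 gen ..
qed

lemma sum3: "(\<Sum>l<(3::nat). \<phi> l) = \<phi> 0 + \<phi> 1 + (\<phi> 2 :: real)"
  by (simp add: eval_nat_numeral lessThan_Suc)

lemma choose2: "real ((N+3) choose 2) = (real N + 3) * (real N + 2) / 2"
proof -
 have le: "2 \<le> N+3" by simp
  have e: "N + 3 - 2 = N + 1" by simp
  have "real ((N+3) choose 2) = fact (N+3) / (fact 2 * fact (N+1))"
    using binomial_fact[OF le, unfolded e] .
  also have "(fact (N+3) :: real) = ((real N + 3) * (real N + 2)) * (fact (N+1) :: real)"
    using fact_Suc[of "N+2"] fact_Suc[of "N+1"] by (simp add: eval_nat_numeral algebra_simps)
  also have "\<dots> / (fact 2 * fact (N+1)) = ((real N + 3) * (real N + 2)) / fact 2"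
    by simp
  finally show ?thesis by (simp add: numeral_2_eq_2)
qed

lemma fact_ratio':
  "fact k / (fact (k+j) * q) = (fact k / fact (k+j)) / (q::real)"
  by simp

lemma T1:
  fixes q :: real assumes "0 < q"
  shows "(\<Sum>k\<le>N. real (N choose k) * q^k * (1-q)^(N-k) * (fact k / fact (k+1)))
     = (1 - (1-q)^(N+1)) / ((real N + 1) * q)"
  by (subst binsum_fact[OF assms]) (use assms in \<open>simp only: fact_ratio' fact_ratio, simp add: field_simps\<close>)

lemma T2:
  fixes q :: real assumes "0 < q"
  shows "(\<Sum>k\<le>N. real (N choose k) * q^k * (1-q)^(N-k) * (fact k / fact (k+2)))
     = (1 - (1-q)^(N+2) - (real N + 2) * q * (1-q)^(N+1)) / ((real N + 1) * (real N + 2) * q^2)"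
  by (subst binsum_fact[OF assms]) (use assms in \<open>simp only: fact_ratio' fact_ratio, simp add: field_simps eval_nat_numeral lessThan_Suc\<close>)

lemma T3:
  fixes q :: real assumes "0 < q"
  shows "(\<Sum>k\<le>N. real (N choose k) * q^k * (1-q)^(N-k) * (fact k / fact (k+3)))
     = (1 - (1-q)^(N+3) - (real N + 3) * q * (1-q)^(N+2) - (real N + 3) * (real N + 2) / 2 * q^2 * (1-q)^(N+1))
        / ((real N + 1) * (real N + 2) * (real N + 3) * q^3)"
  by (subst binsum_fact[OF assms]) (use assms in \<open>simp only: fact_ratio' fact_ratio sum3 choose2, simp add: field_simps\<close>)

lemma T4:
  fixes q :: real assumes "0 < q" "q \<le> 1"
  shows "(\<Sum>k\<le>N. real (N choose k) * q^k * (1-q)^(N-k) * (fact k / fact (k+4)))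
     \<le> 1 / ((real N + 1) * (real N + 2) * (real N + 3) * (real N + 4) * q^4)"
proof -
  have "0 \<le> (\<Sum>l<4. real ((N+4) choose l) * q^l * (1-q)^(N+4-l))"
    using assms by (intro sum_nonneg) auto
  then have "(\<Sum>k\<le>N. real (N choose k) * q^k * (1-q)^(N-k) * (fact k / fact (k+4))) \<le> fact N / (fact (N+4) * q^4)"
  proof -
    let ?s = "(\<Sum>l<4. real ((N+4) choose l) * q^l * (1-q)^(N+4-l))"
    have "fact N * (1 - ?s) \<le> (fact N :: real)" using \<open>0 \<le> ?s\<close> by (simp add: algebra_simps)
    hence "fact N * (1 - ?s) / (fact (N+4) * q^4) \<le> fact N / (fact (N+4) * q^4)"
      using assms by (intro divide_right_mono) auto
    thus ?thesis using binsum_fact[OF assms(1), of N 4] by simp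
  qed
  also have "fact N / (fact (N+4) * q^4) = 1 / ((real N + 1) * (real N + 2) * (real N + 3) * (real N + 4) * q^4)"
    by (simp add: fact_ratio' fact_ratio)
  finally show ?thesis .
qed




lemma Eb1:
  assumes m: "m \<ge> 1"
  shows "measure_pmf.expectation (binomial_pmf N (1/real m)) (\<lambda>k. 1 / real (k+2))
    = (1 - (1-1/real m)^(N+1)) / ((real N + 1) * (1/real m))
      - (1 - (1-1/real m)^(N+2) - (real N + 2) * (1/real m) * (1-1/real m)^(N+1)) / ((real N + 1) * (real N + 2) * (1/real m)^2)"
proof -
  define q where "q = 1 / real m"
  have q: "0 < q" "q \<le> 1" using m unfolding q_def by auto
  have pt: "1 / real (k+2) = fact k / fact (k+1) - fact k / fact (k+2)" for k
  proof -
    have "1/(2+y) = 1/(y+1) - 1/((y+1)*(y+2))" if "y \<ge> 0" for y :: real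
      using that by (simp add: divide_simps add.commute)
    from this[of "real k"] show ?thesis unfolding fact_ratio by simp
  qed
  have "measure_pmf.expectation (binomial_pmf N q) (\<lambda>k. 1 / real (k+2))
     = (\<Sum>k\<le>N. real (N choose k) * q^k * (1-q)^(N-k) * (fact k / fact (k+1)))
     - (\<Sum>k\<le>N. real (N choose k) * q^k * (1-q)^(N-k) * (fact k / fact (k+2)))"
  proof -
    have "measure_pmf.expectation (binomial_pmf N q) (\<lambda>k. 1 / real (k+2))
      = (\<Sum>k\<le>N. real (N choose k) * q^k * (1-q)^(N-k) * (1 / real (k+2)))"
      using q by (rule bin_exp[OF less_imp_le])
    also have "\<dots> = (\<Sum>k\<le>N. real (N choose k) * q^k * (1-q)^(N-k) * (fact k / fact (k+1))
        - real (N choose k) * q^k * (1-q)^(N-k) * (fact k / fact (k+2)))"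
      by (intro sum.cong refl) (simp only: pt right_diff_distrib)
    finally show ?thesis by (simp only: sum_subtractf)
  qed
  then show ?thesis unfolding q_def[symmetric] using T1[OF q(1)] T2[OF q(1)] by simp
qed

lemma alg1:
  fixes M a b x r :: real
  assumes "M \<ge> 1" "a > 0" "b > 0"
  shows "((1 - x) / (a * (1/M)) - (1 - r*x - b * (1/M) * x) / (a * b * (1/M)^2)) / M
     = 1/a * (1 - M/b * (1 - r*x))"
proof -
  have p: "b > 0" "M > 0" "a > 0" using assms by auto
  have "((1 - x) / (a * (1/M)) - (1 - r*x - b * (1/M) * x) / (a * b * (1/M)^2)) / M
     = ((1 - x) * b - M * (1 - r*x - b * (1/M) * x)) / (a * b)"
    using p by (simp add: field_simps power2_eq_square)
  also have "\<dots> = 1/a * (1 - M/b * (1 - r*x))"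
    using p by (simp add: field_simps)
  finally show ?thesis .
qed

lemma part1:
  assumes m: "m \<ge> 1" and A: "A \<subseteq> {1..p}" "card A > 1" and j: "j \<in> {1..p}"
  shows "measure_pmf.expectation (hash_pmf p m)
        (\<lambda>h. real (card (A \<inter> preim h p (h j) - {j})) / real (card (preim h p (h j))))
      = (real (card A) - (if j \<in> A then 1 else 0)) / (real p - 1)
        * (1 - real m / real p * (1 - ((real m - 1) / real m) ^ p))"
proof -
  have "card A \<le> p" using card_mono[OF _ A(1)] by simp
  hence p: "p \<ge> 2" using A by simp
  define N where "N = p - 2"
  have pN: "p = N + 2" using p unfolding N_def by simp
  have cA: "real (card (A - {j})) = real (card A) - (if j \<in> A then 1 else 0)"
    using A by (simp add: card_Diff_singleton_if of_nat_diff)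
  have "(\<lambda>h. real (card (A \<inter> preim h p (h j) - {j})) / real (card (preim h p (h j))))
      = (\<lambda>h. real (card (A \<inter> preim h p (h j) - {j})) * (\<lambda>n. 1 / real n) (card (preim h p (h j))))"
    by (simp add: fun_eq_iff)
  then have "measure_pmf.expectation (hash_pmf p m)
        (\<lambda>h. real (card (A \<inter> preim h p (h j) - {j})) / real (card (preim h p (h j))))
    = real (card (A - {j})) * (measure_pmf.expectation (binomial_pmf N (1/real m)) (\<lambda>k. 1 / real (k+2)) / real m)"
    using main_exp[OF m A(1) j, of "\<lambda>n. 1 / real n"] unfolding N_def by simp
  also have "\<dots> = (real (card A) - (if j \<in> A then 1 else 0)) / (real p - 1)
        * (1 - real m / real p * (1 - ((real m - 1) / real m) ^ p))"
  proof -
    define r where "r = 1 - 1 / real m"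
    have r: "(real m - 1) / real m = r" using m unfolding r_def by (simp add: field_simps)
    define x where "x = r ^ (N+1)"
    have x2: "r^(N+2) = r * x" unfolding x_def by simp
    have a: "measure_pmf.expectation (binomial_pmf N (1/real m)) (\<lambda>k. 1 / real (k+2)) / real m
        = 1/(real N+1) * (1 - real m/(real N+2) * (1 - r*x))"
      unfolding Eb1[OF m] r_def[symmetric] x2 x_def[symmetric]
      by (rule alg1) (use m r_def in auto)
    have e: "real p - 1 = real N + 1" "real p = real N + 2" "r^p = r*x" using pN x2 by auto
    show ?thesis unfolding a cA r e by simp
  qed
  finally show ?thesis .
qed





lemma expbound:
  fixes r :: real
  assumes "0 \<le> r" "r < 1"
  shows "\<exists>B. \<forall>n. (real n + 1)^3 * r^n \<le> B"
proof -
  define s where "s = root 3 r"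
  have s0: "0 \<le> s" unfolding s_def using assms by simp
  have s3: "s^3 = r" unfolding s_def using assms by (simp add: real_root_pow_pos2)
  have s1: "s < 1" unfolding s_def using assms by simp
  have "(\<lambda>n. of_nat n * s^n) \<longlonglongrightarrow> 0"
    by (rule powser_times_n_limit_0) (use s0 s1 in simp)
  hence "Bseq (\<lambda>n. of_nat n * s^n)" by (rule convergent_imp_Bseq[OF convergentI])
  then obtain K where K0: "\<forall>n. norm (of_nat n * s^n) \<le> K" unfolding Bseq_def by auto
  have K: "norm (of_nat n * s^n) \<le> K" for n using K0 by blast
  have "(real n + 1)^3 * r^n \<le> (K+1)^3" for n
  proof -
    have a: "real n * s^n \<le> K" using K[of n] s0 by simp
    have b: "s^n \<le> 1" using s0 s1 by (simp add: power_le_one)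
    have c: "(real n + 1) * s^n \<le> K + 1" using a b by (simp add: algebra_simps)
    have "(real n + 1)^3 * r^n = ((real n + 1) * s^n)^3"
      by (simp add: s3[symmetric] power_mult_distrib flip: power_mult) (simp add: mult.commute)
    also have "\<dots> \<le> (K+1)^3"
      by (rule power_mono[OF c]) (use s0 in simp)
    finally show ?thesis .
  qed
  thus ?thesis by blast
qed

lemma alg2:
  fixes M a b c d y B SR Eb r :: real
  assumes M: "M \<ge> 1" and b: "b \<ge> 2" and abcd: "a = b - 1" "c = b + 1" "d = b + 2"
    and r: "r = 1 - 1/M" and y: "0 \<le> y" and yB: "b^3 * y \<le> B"
    and SR: "0 \<le> SR" "SR \<le> 2 / (a*b*c*d*(1/M)^4)"
    and Eb: "Eb = (1 - r*y - b*(1/M)*y)/(a*b*(1/M)^2)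
       - (1 - r^2*y - c*(1/M)*(r*y) - c*b/2*(1/M)^2*y)/(a*b*c*(1/M)^3) - SR"
  shows "\<bar>a/M^2 * Eb - 1/a + (M+1)/a^2\<bar> \<le> (4*(3*M+2) + 2*B + 2*M*B + 2*M^2)/b^3"
proof -
  have pos: "a > 0" "b > 0" "c > 0" "d > 0" "M > 0" using abcd b M by auto
  define q where "q = 1/M"
  have q: "0 < q" "q \<le> 1" using M unfolding q_def by auto
  have r01: "0 \<le> r" "r \<le> 1" using r q unfolding q_def by auto
  define e2 where "e2 = r*y + b*q*y"
  define e3 where "e3 = r^2*y + c*q*r*y + c*b/2*q^2*y"
  define main where "main = 1/b - M/(b*c) - 1/a + (M+1)/a^2"
  have X1: "a/M^2 * ((1 - r*y - b*(1/M)*y)/(a*b*(1/M)^2)) = (1 - e2)/b"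
    unfolding e2_def q_def using pos by (simp add: field_simps power2_eq_square)
  have X2: "a/M^2 * ((1 - r^2*y - c*(1/M)*(r*y) - c*b/2*(1/M)^2*y)/(a*b*c*(1/M)^3)) = M*(1 - e3)/(b*c)"
    unfolding e3_def q_def using pos by (simp add: field_simps power2_eq_square power3_eq_cube)
  have rr: "a/M^2 * Eb - 1/a + (M+1)/a^2 = main - e2/b + M*e3/(b*c) - a/M^2*SR"
    unfolding Eb right_diff_distrib X1 X2 main_def using pos by (simp add: field_simps)
  have mnum: "main * (b*c*a^2) = 3*M*b + b + 1 - M"
  proof -
    have "main * (b*c*a^2) = c*a^2 - M*a^2 - b*c*a + (M+1)*b*c"
      unfolding main_def using pos by (simp add: field_simps power2_eq_square)
    also have "\<dots> = 3*M*b + b + 1 - M"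
      unfolding abcd by (simp add: algebra_simps power2_eq_square)
    finally show ?thesis .
  qed
  have den: "b^4/4 \<le> b*c*a^2"
  proof -
    have "b/2 \<le> a" using abcd b by simp
    hence "(b/2)^2 \<le> a^2" by (rule power_mono) (use b in simp)
    moreover have "b*b \<le> b*c" using abcd b by simp
    ultimately have "(b*b) * (b/2)^2 \<le> (b*c) * a^2"
      by (intro mult_mono) (use pos in auto)
    thus ?thesis by (simp add: power2_eq_square power4_eq_xxxx field_simps)
  qed
  have main0: "0 \<le> main"
  proof -
    have "M*1 \<le> M*b" using M b by (intro mult_left_mono) auto
    hence "0 \<le> 3*M*b + b + 1 - M" using M b by linarith
    hence "0 \<le> main * (b*c*a^2)" using mnum by simp
    moreover have "0 < b*c*a^2" using pos by simp
    ultimately show ?thesis by (auto simp: zero_le_mult_iff)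
  qed
  have mainB: "main \<le> 4*(3*M+2)/b^3"
  proof -
    have "main = (3*M*b + b + 1 - M) / (b*c*a^2)" using mnum pos by (simp add: field_simps)
    also have "\<dots> \<le> ((3*M+2)*b) / (b^4/4)"
      by (rule frac_le) (use M b pos den in \<open>auto simp: algebra_simps\<close>)
    also have "\<dots> = 4*(3*M+2)/b^3" using pos by (simp add: field_simps power4_eq_xxxx power3_eq_cube)
    finally show ?thesis .
  qed
  have yb: "y \<le> B/b^3" using yB pos by (simp add: field_simps)
  have e2B: "0 \<le> e2/b" "e2/b \<le> 2*B/b^3"
  proof -
    show "0 \<le> e2/b" unfolding e2_def using r01 q y pos by simp
    have "e2 \<le> y + b*y" unfolding e2_def using r01 q y pos
      by (intro add_mono mult_right_le_one_le mult_le_cancel_left1[THEN iffD2]) (auto intro: mult_left_le_one_le)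
    hence "e2/b \<le> (y + b*y)/b" using pos by (simp add: divide_right_mono)
    also have "\<dots> \<le> 2*y"
    proof -
      have "y*1 \<le> y*b" using y b by (intro mult_left_mono) auto
      thus ?thesis using pos by (simp add: field_simps)
    qed
    also have "\<dots> \<le> 2*B/b^3" using yb by simp
    finally show "e2/b \<le> 2*B/b^3" .
  qed
  have e3B: "0 \<le> M*e3/(b*c)" "M*e3/(b*c) \<le> 2*M*B/b^3"
  proof -
    show "0 \<le> M*e3/(b*c)" unfolding e3_def using r01 q y pos by simp
    have "e3 \<le> y + c*y + c*b/2*y" unfolding e3_def
    proof (intro add_mono)
      have "r^2 \<le> 1" using r01 by (simp add: power_le_one)
      thus "r^2*y \<le> y" using y r01 by (intro mult_left_le_one_le) auto
      have "q*r \<le> 1" using q r01 by (intro mult_le_one) auto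
      hence "(q*r)*(c*y) \<le> c*y" using y pos q r01 by (intro mult_left_le_one_le) auto
      thus "c*q*r*y \<le> c*y" by (simp add: algebra_simps)
      have "q^2 \<le> 1" using q by (simp add: power_le_one)
      hence "q^2*(c*b/2*y) \<le> c*b/2*y" using y pos q by (intro mult_left_le_one_le) auto
      thus "c*b/2*q^2*y \<le> c*b/2*y" by (simp add: algebra_simps)
    qed
    hence "M*e3/(b*c) \<le> M*(y + c*y + c*b/2*y)/(b*c)" using pos by (simp add: divide_right_mono)
    also have "\<dots> \<le> M*(2*y)"
    proof -
      have "2*c \<le> b*c" using b pos by (intro mult_right_mono) auto
      moreover have "2*3 \<le> b*c" using b abcd by (intro mult_mono) auto
      ultimately have "1 + c + c*b/2 \<le> 2*b*c" by (simp add: algebra_simps)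
      hence "y*(1 + c + c*b/2) \<le> y*(2*b*c)" by (rule mult_left_mono) (use y in auto)
      hence "M*(y*(1 + c + c*b/2)) \<le> M*(y*(2*b*c))" by (rule mult_left_mono) (use pos in auto)
      thus ?thesis using pos by (simp add: pos_divide_le_eq algebra_simps)
    qed
    also have "\<dots> \<le> M*(2*(B/b^3))" by (rule mult_left_mono) (use yb pos in auto)
    also have "\<dots> = 2*M*B/b^3" by simp
    finally show "M*e3/(b*c) \<le> 2*M*B/b^3" .
  qed
  have SRB: "0 \<le> a/M^2*SR" "a/M^2*SR \<le> 2*M^2/b^3"
  proof -
    show "0 \<le> a/M^2*SR" using pos SR by simp
    have "a/M^2*SR \<le> a/M^2 * (2 / (a*b*c*d*(1/M)^4))"
      using SR pos by (intro mult_left_mono) auto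
    also have "\<dots> = 2*M^2/(b*c*d)" using pos by (simp add: field_simps power2_eq_square power4_eq_xxxx)
    also have "\<dots> \<le> 2*M^2/b^3"
    proof (rule divide_left_mono)
      have "b*b \<le> b*c" "b*b*b \<le> b*c*d" using abcd pos
        by (auto intro!: mult_mono)
      thus "b^3 \<le> b*c*d" by (simp add: power3_eq_cube)
    qed (use pos in auto)
    finally show "a/M^2*SR \<le> 2*M^2/b^3" .
  qed
  have "\<bar>a/M^2 * Eb - 1/a + (M+1)/a^2\<bar> \<le> 4*(3*M+2)/b^3 + 2*B/b^3 + 2*M*B/b^3 + 2*M^2/b^3"
    unfolding rr using main0 mainB e2B e3B SRB by (simp add: abs_le_iff)
  also have "\<dots> = (4*(3*M+2) + 2*B + 2*M*B + 2*M^2)/b^3" by (simp add: add_divide_distrib)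
  finally show ?thesis .
qed


lemma Eb2:
  assumes m: "m \<ge> 1"
  shows "\<exists>SR. 0 \<le> SR \<and> SR \<le> 2 / ((real N+1)*(real N+2)*(real N+3)*(real N+4)*(1/real m)^4) \<and>
    measure_pmf.expectation (binomial_pmf N (1/real m)) (\<lambda>k. 1 / real (k+2)^2)
    = (1 - (1 - 1/real m)*(1 - 1/real m)^(N+1) - (real N+2)*(1/real m)*(1 - 1/real m)^(N+1))
        /((real N+1)*(real N+2)*(1/real m)^2)
      - (1 - (1 - 1/real m)^2*(1 - 1/real m)^(N+1) - (real N+3)*(1/real m)*((1 - 1/real m)*(1 - 1/real m)^(N+1))
           - (real N+3)*(real N+2)/2*(1/real m)^2*(1 - 1/real m)^(N+1))
        /((real N+1)*(real N+2)*(real N+3)*(1/real m)^3) - SR"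
proof -
  define q where "q = 1 / real m"
  have q: "0 < q" "q \<le> 1" using m unfolding q_def by auto
  define w where "w k = real (N choose k) * q^k * (1-q)^(N-k)" for k
  have w0: "0 \<le> w k" for k unfolding w_def using q by simp
  define R where "R k = 1 / ((real k + 1) * (real k + 2)^2 * (real k + 3))" for k
  have pt: "1 / real (k+2)^2 = fact k / fact (k+2) - fact k / fact (k+3) - R k" for k
  proof -
    have "1/(2+y)^2 = 1/((y+1)*(y+2)) - 1/((y+1)*(y+2)*(y+3)) - 1/((y+1)*(y+2)^2*(y+3))"
      if "y \<ge> 0" for y :: real
      using that by (simp add: divide_simps add.commute) (simp add: algebra_simps power2_eq_square)
    from this[of "real k"] show ?thesis unfolding fact_ratio R_def by simp
  qed
  have R0: "0 \<le> R k" for k unfolding R_def by simp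
  have R4: "R k \<le> 2 * (fact k / fact (k+4))" for k
  proof -
    have "1/((y+1)*(y+2)^2*(y+3)) \<le> 2 * (1/((y+1)*(y+2)*(y+3)*(y+4)))" if "y \<ge> 0" for y :: real
    proof -
      have e: "1/((y+1)*(y+2)^2*(y+3)) = (1/((y+1)*(y+2)*(y+3)*(y+4))) * ((y+4)/(y+2))"
      proof -
        have yy: "((y+1)*(y+2)*(y+3)*(y+4))*(y+2) = ((y+1)*(y+2)^2*(y+3))*(y+4)"
          by (simp add: algebra_simps power2_eq_square)
        have "(1/((y+1)*(y+2)*(y+3)*(y+4))) * ((y+4)/(y+2)) = (y+4)/(((y+1)*(y+2)*(y+3)*(y+4))*(y+2))"
          by simp
        also have "\<dots> = (y+4)/(((y+1)*(y+2)^2*(y+3))*(y+4))" unfolding yy ..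
        also have "\<dots> = 1/((y+1)*(y+2)^2*(y+3))"
          using that by (simp add: nonzero_divide_mult_cancel_right)
        finally show ?thesis by simp
      qed
      have "(y+4)/(y+2) \<le> 2" using that by (simp add: divide_simps)
      then have "(1/((y+1)*(y+2)*(y+3)*(y+4))) * ((y+4)/(y+2)) \<le> (1/((y+1)*(y+2)*(y+3)*(y+4))) * 2"
        by (rule mult_left_mono) (use that in simp)
      then show ?thesis unfolding e by (simp only: mult.commute)
    qed
    from this[of "real k"] show ?thesis unfolding fact_ratio R_def by simp
  qed
  define SR where "SR = (\<Sum>k\<le>N. w k * R k)"
  have E: "measure_pmf.expectation (binomial_pmf N q) (\<lambda>k. 1 / real (k+2)^2)
     = (\<Sum>k\<le>N. w k * (fact k / fact (k+2))) - (\<Sum>k\<le>N. w k * (fact k / fact (k+3))) - SR"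
  proof -
    have "measure_pmf.expectation (binomial_pmf N q) (\<lambda>k. 1 / real (k+2)^2)
      = (\<Sum>k\<le>N. w k * (1 / real (k+2)^2))"
      unfolding w_def using q by (rule bin_exp[OF less_imp_le])
    also have "\<dots> = (\<Sum>k\<le>N. w k * (fact k / fact (k+2)) - w k * (fact k / fact (k+3)) - w k * R k)"
      by (intro sum.cong refl) (simp only: pt right_diff_distrib)
    finally show ?thesis unfolding SR_def by (simp only: sum_subtractf)
  qed
  have SR0: "0 \<le> SR" unfolding SR_def using w0 R0 by (intro sum_nonneg) auto
  have "SR \<le> (\<Sum>k\<le>N. w k * (2 * (fact k / fact (k+4))))"
    unfolding SR_def using w0 R4 by (intro sum_mono mult_left_mono) auto
  also have "\<dots> = 2 * (\<Sum>k\<le>N. w k * (fact k / fact (k+4)))"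
    by (simp add: sum_distrib_left algebra_simps)
  also have "\<dots> \<le> 2 * (1 / ((real N + 1) * (real N + 2) * (real N + 3) * (real N + 4) * q^4))"
    using T4[OF q, of N] unfolding w_def by simp
  finally have SR1: "SR \<le> 2 / ((real N+1)*(real N+2)*(real N+3)*(real N+4)*q^4)" by simp
  have p2: "(1-q)^(N+2) = (1-q)*(1-q)^(N+1)" "(1-q)^(N+3) = (1-q)^2*(1-q)^(N+1)"
    by (simp_all add: eval_nat_numeral)
  show ?thesis
    apply (rule exI[of _ SR])
    using SR0 SR1 E T2[OF q(1), of N] T3[OF q(1), of N]
    unfolding q_def[symmetric] w_def p2 by simp
qed




theorem lemma4:
  fixes m :: nat
  assumes "m \<ge> 1"
  shows
   "(\<forall>p A j. A \<subseteq> {1..p} \<and> card A > 1 \<and> j \<in> {1..p} \<longrightarrow>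
      measure_pmf.expectation (hash_pmf p m)
        (\<lambda>h. real (card (A \<inter> preim h p (h j) - {j})) / real (card (preim h p (h j))))
      = (real (card A) - (if j \<in> A then 1 else 0)) / (real p - 1)
        * (1 - real m / real p * (1 - ((real m - 1) / real m) ^ p)))
    \<and>
    (\<exists>C P0. \<forall>p \<ge> P0. \<forall>A j. A \<subseteq> {1..p} \<and> card A > 1 \<and> j \<in> {1..p} \<longrightarrow>
      (\<exists>r. \<bar>r\<bar> \<le> C / real p ^ 3 \<and>
        measure_pmf.expectation (hash_pmf p m)
          (\<lambda>h. real (card (A \<inter> preim h p (h j) - {j})) / real (card (preim h p (h j))) ^ 2)
        = real m * ((real (card A) - (if j \<in> A then 1 else 0)) / (real p - 1))
          * (1 / (real p - 1) - (real m + 1) / (real p - 1) ^ 2 + r)))"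
proof (rule conjI)
  show "\<forall>p A j. A \<subseteq> {1..p} \<and> card A > 1 \<and> j \<in> {1..p} \<longrightarrow>
      measure_pmf.expectation (hash_pmf p m)
        (\<lambda>h. real (card (A \<inter> preim h p (h j) - {j})) / real (card (preim h p (h j))))
      = (real (card A) - (if j \<in> A then 1 else 0)) / (real p - 1)
        * (1 - real m / real p * (1 - ((real m - 1) / real m) ^ p))"
    using part1[OF assms] by blast
next
  define r where "r = 1 - 1 / real m"
  have r01: "0 \<le> r" "r < 1" using assms unfolding r_def by auto
  obtain B where B: "\<And>n. (real n + 1)^3 * r^n \<le> B" using expbound[OF r01] by blast
  define C where "C = 4*(3*real m+2) + 2*B + 2*real m*B + 2*real m^2"
  show "\<exists>C P0. \<forall>p \<ge> P0. \<forall>A j. A \<subseteq> {1..p} \<and> card A > 1 \<and> j \<in> {1..p} \<longrightarrow>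
      (\<exists>r. \<bar>r\<bar> \<le> C / real p ^ 3 \<and>
        measure_pmf.expectation (hash_pmf p m)
          (\<lambda>h. real (card (A \<inter> preim h p (h j) - {j})) / real (card (preim h p (h j))) ^ 2)
        = real m * ((real (card A) - (if j \<in> A then 1 else 0)) / (real p - 1))
          * (1 / (real p - 1) - (real m + 1) / (real p - 1) ^ 2 + r))"
  proof (rule exI[of _ C], rule exI[of _ "2::nat"], intro allI impI)
    fix p :: nat and A :: "nat set" and j :: nat
    assume p: "p \<ge> 2" and H: "A \<subseteq> {1..p} \<and> card A > 1 \<and> j \<in> {1..p}"
    define N where "N = p - 2"
    have pN: "p = N + 2" using p unfolding N_def by simp
    define Eb where "Eb = measure_pmf.expectation (binomial_pmf N (1/real m)) (\<lambda>k. 1 / real (k+2)^2)"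
    obtain SR where SR: "0 \<le> SR" "SR \<le> 2 / ((real N+1)*(real N+2)*(real N+3)*(real N+4)*(1/real m)^4)"
      and EbF: "Eb = (1 - (1 - 1/real m)*(1 - 1/real m)^(N+1) - (real N+2)*(1/real m)*(1 - 1/real m)^(N+1))
        /((real N+1)*(real N+2)*(1/real m)^2)
      - (1 - (1 - 1/real m)^2*(1 - 1/real m)^(N+1) - (real N+3)*(1/real m)*((1 - 1/real m)*(1 - 1/real m)^(N+1))
           - (real N+3)*(real N+2)/2*(1/real m)^2*(1 - 1/real m)^(N+1))
        /((real N+1)*(real N+2)*(real N+3)*(1/real m)^3) - SR"
      using Eb2[OF assms, of N] unfolding Eb_def by blast
    have cA: "real (card (A - {j})) = real (card A) - (if j \<in> A then 1 else 0)"
      using H by (simp add: card_Diff_singleton_if of_nat_diff)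
    have "(\<lambda>h. real (card (A \<inter> preim h p (h j) - {j})) / real (card (preim h p (h j))) ^ 2)
      = (\<lambda>h. real (card (A \<inter> preim h p (h j) - {j})) * (\<lambda>n. 1 / real n ^ 2) (card (preim h p (h j))))"
      by (simp add: fun_eq_iff)
    then have E2: "measure_pmf.expectation (hash_pmf p m)
          (\<lambda>h. real (card (A \<inter> preim h p (h j) - {j})) / real (card (preim h p (h j))) ^ 2)
        = (real (card A) - (if j \<in> A then 1 else 0)) * (Eb / real m)"
      using main_exp[OF assms, of A p j "\<lambda>n. 1 / real n ^ 2"] H unfolding cA Eb_def N_def by simp
    define a where "a = real p - 1"
    define rr where "rr = a/(real m)^2 * Eb - 1/a + (real m+1)/a^2"
    have y: "0 \<le> r^(N+1)" using r01 by simp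
    have yB: "(real p)^3 * r^(N+1) \<le> B" using B[of "N+1"] pN by simp
    have rrB: "\<bar>rr\<bar> \<le> C / real p ^ 3"
      unfolding rr_def C_def
    proof (rule alg2[where b="real p" and c="real p + 1" and d="real p + 2" and r=r and y="r^(N+1)" and SR=SR])
      show "1 \<le> real m" using assms by simp
      show "2 \<le> real p" using p by simp
      show "a = real p - 1" by (rule a_def)
      show "real p + 1 = real p + 1" "real p + 2 = real p + 2" by simp_all
      show "r = 1 - 1 / real m" by (rule r_def)
      show "0 \<le> r^(N+1)" by (rule y)
      show "(real p)^3 * r^(N+1) \<le> B" by (rule yB)
      show "0 \<le> SR" by (rule SR(1))
      show "SR \<le> 2 / (a * real p * (real p + 1) * (real p + 2) * (1 / real m) ^ 4)"
        using SR(2) unfolding a_def pN by (simp add: algebra_simps)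
      show "Eb = (1 - r * r^(N+1) - real p * (1 / real m) * r^(N+1)) / (a * real p * (1 / real m)^2)
        - (1 - r^2 * r^(N+1) - (real p + 1) * (1 / real m) * (r * r^(N+1)) - (real p + 1) * real p / 2 * (1 / real m)^2 * r^(N+1))
          / (a * real p * (real p + 1) * (1 / real m)^3) - SR"
        unfolding EbF a_def pN r_def by (simp add: algebra_simps)
    qed
    have am: "a > 0" "real m > 0" using p assms unfolding a_def by auto
    have "real m * ((real (card A) - (if j \<in> A then 1 else 0)) / (real p - 1))
          * (1 / (real p - 1) - (real m + 1) / (real p - 1) ^ 2 + rr)
        = real m * ((real (card A) - (if j \<in> A then 1 else 0)) / a) * (a/(real m)^2 * Eb)"
      unfolding rr_def a_def by simp
    also have "\<dots> = (real (card A) - (if j \<in> A then 1 else 0)) * (Eb / real m)"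
      using am by (simp add: field_simps power2_eq_square)
    finally have eqR: "real m * ((real (card A) - (if j \<in> A then 1 else 0)) / (real p - 1))
          * (1 / (real p - 1) - (real m + 1) / (real p - 1) ^ 2 + rr)
        = (real (card A) - (if j \<in> A then 1 else 0)) * (Eb / real m)" .
    show "\<exists>r. \<bar>r\<bar> \<le> C / real p ^ 3 \<and>
        measure_pmf.expectation (hash_pmf p m)
          (\<lambda>h. real (card (A \<inter> preim h p (h j) - {j})) / real (card (preim h p (h j))) ^ 2)
        = real m * ((real (card A) - (if j \<in> A then 1 else 0)) / (real p - 1))
          * (1 / (real p - 1) - (real m + 1) / (real p - 1) ^ 2 + r)"
      by (rule exI[of _ rr]) (simp only: rrB E2 eqR simp_thms)
  qed
qed


end
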